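(* Assume $|M|\ge 2$. Let $(T_{opt},B_{opt})$ be an optimal solution of an instance of MEMTCS and let $T_I$ be a minimum isotropic scattering tree for $M$. Then $\sum_{u\in nl(T_{opt})}|B_{opt}(u)|\ \ge\ \Xi(T_I)-|d^+(T_{opt})|+1$.
   Context: Let $G=(V,E)$ be a finite, simple, undirected, connected graph with $|V|\ge 2$. Fix a positive integer $K$ and, for every $u\in V$, a nonempty set $\Gamma(u)\subseteq\{1,\dots,K\}$. For a tree $T$, $N(T)$ is its vertex set, $nb_T(u)$ the neighbours of $u$ in $T$, and $d^+(T)$ the set of vertices of degree greater than one in $T$; if $T$ is rooted, $nl(T)$ is its set of non-leaf vertices and $child(u,T)$ the set of children of $u$. A hitting set of a collection $\mathcal C$ of subsets of a finite set $\mathcal F$ is a subset of $\mathcal F$ meeting every member of $\mathcal C$. For a tree $T$ in $G$ and $u\in d^+(T)$, let $\Upsilon(u,T)$ be a minimum-cardinality hitting set of $\{\Gamma(v): v\in nb_T(u)\}$, and let $\Xi(T)=\sum_{u\in d^+(T)}|\Upsilon(u,T)|$. A minimum isotropic scattering tree $T_I$ for $M$ is a tree in $G$ with $M\subseteq N(T_I)$ minimizing $\Xi$ among all such trees. An instance of MEMTCS consists of $G,K,\Gamma$, a terminal set $M\subseteq V$, a source $s\in M$, and reals $e_s\ge e_r\ge 0$. A multicast tree is a subtree $T$ of $G$ with $M\subseteq N(T)$, rooted at $s$. A feasible schedule for $T$ is a function $B: nl(T)\to 2^{\{1,\dots,K\}}$ such that each $B(u)$ is a hitting set of $\{\Gamma(v):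 v\in child(u,T)\}$. Its cost is $\Pi(T,B)=\sum_{u\in nl(T)}|B(u)|\,e_s+(|N(T)|-1)\,e_r$. An optimal solution $(T_{opt},B_{opt})$ minimizes $\Pi$ over all pairs of a multicast tree and a feasible schedule for it. *)

theory Defs
  imports Complex_Main
begin

(* Graphs: vertex set V :: 'a set, edge set E :: 'a set set (undirected edges {u,v}, u ~= v).
   A subgraph / tree is a pair (N, F) of a vertex set and an edge set. *)

definition simple_graph :: "'a set \<Rightarrow> 'a set set \<Rightarrow> bool" where
  "simple_graph V E \<longleftrightarrow> finite V \<and>
     (\<forall>e\<in>E. \<exists>u v. u \<noteq> v \<and> e = {u, v} \<and> u \<in> V \<and> v \<in> V)"

definition adj :: "'a set set \<Rightarrow> ('a \<times> 'a) set" where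
  "adj F = {(x, y). {x, y} \<in> F}"

definition reach :: "'a set set \<Rightarrow> 'a \<Rightarrow> 'a \<Rightarrow> bool" where
  "reach F u v \<longleftrightarrow> (u, v) \<in> (adj F)\<^sup>*"

definition connected_on :: "'a set \<Rightarrow> 'a set set \<Rightarrow> bool" where
  "connected_on N F \<longleftrightarrow> (\<forall>u\<in>N. \<forall>v\<in>N. reach F u v)"

definition connected_graph :: "'a set \<Rightarrow> 'a set set \<Rightarrow> bool" where
  "connected_graph V E \<longleftrightarrow> simple_graph V E \<and> connected_on V E"

(* A tree in G: a subgraph (N,F) of G, with nonempty finite vertex set, which is connected
   and acyclic; acyclicity is expressed as: every edge is a bridge (minimally connected). *)
definition tree_in :: "'a set \<Rightarrow> 'a set set \<Rightarrow> 'a set \<times> 'a set set \<Rightarrow> bool" where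
  "tree_in V E T \<longleftrightarrow> (case T of (N, F) \<Rightarrow>
     N \<noteq> {} \<and> finite N \<and> N \<subseteq> V \<and> F \<subseteq> E \<and> (\<forall>e\<in>F. e \<subseteq> N) \<and>
     connected_on N F \<and> (\<forall>e\<in>F. \<not> connected_on N (F - {e})))"

definition Nodes :: "'a set \<times> 'a set set \<Rightarrow> 'a set" where
  "Nodes T = fst T"

definition nb :: "'a set \<times> 'a set set \<Rightarrow> 'a \<Rightarrow> 'a set" where
  "nb T u = {v. {u, v} \<in> snd T}"

definition dplus :: "'a set \<times> 'a set set \<Rightarrow> 'a set" where
  "dplus T = {u \<in> Nodes T. card (nb T u) > 1}"

definition child :: "'a \<Rightarrow> 'a set \<times> 'a set set \<Rightarrow> 'a \<Rightarrow> 'a set" where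
  "child s T u = {v \<in> nb T u. \<not> reach (snd T - {{u, v}}) v s}"

definition nl :: "'a \<Rightarrow> 'a set \<times> 'a set set \<Rightarrow> 'a set" where
  "nl s T = {u \<in> Nodes T. child s T u \<noteq> {}}"

definition hitting_set :: "nat \<Rightarrow> nat set set \<Rightarrow> nat set \<Rightarrow> bool" where
  "hitting_set K C H \<longleftrightarrow> H \<subseteq> {1..K} \<and> (\<forall>X\<in>C. H \<inter> X \<noteq> {})"

definition min_hs_card :: "nat \<Rightarrow> nat set set \<Rightarrow> nat" where
  "min_hs_card K C = (LEAST n. \<exists>H. hitting_set K C H \<and> card H = n)"

definition Xi :: "nat \<Rightarrow> ('a \<Rightarrow> nat set) \<Rightarrow> 'a set \<times> 'a set set \<Rightarrow> nat" where
  "Xi K \<Gamma> T = (\<Sum>u\<in>dplus T. min_hs_card K (\<Gamma> ` nb T u))"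

definition min_isotropic_scattering_tree ::
  "'a set \<Rightarrow> 'a set set \<Rightarrow> nat \<Rightarrow> ('a \<Rightarrow> nat set) \<Rightarrow> 'a set \<Rightarrow> 'a set \<times> 'a set set \<Rightarrow> bool" where
  "min_isotropic_scattering_tree V E K \<Gamma> M T \<longleftrightarrow>
     tree_in V E T \<and> M \<subseteq> Nodes T \<and>
     (\<forall>T'. tree_in V E T' \<and> M \<subseteq> Nodes T' \<longrightarrow> Xi K \<Gamma> T \<le> Xi K \<Gamma> T')"

definition multicast_tree :: "'a set \<Rightarrow> 'a set set \<Rightarrow> 'a set \<Rightarrow> 'a set \<times> 'a set set \<Rightarrow> bool" where
  "multicast_tree V E M T \<longleftrightarrow> tree_in V E T \<and> M \<subseteq> Nodes T"

definition feasible_schedule ::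
  "nat \<Rightarrow> ('a \<Rightarrow> nat set) \<Rightarrow> 'a \<Rightarrow> 'a set \<times> 'a set set \<Rightarrow> ('a \<Rightarrow> nat set) \<Rightarrow> bool" where
  "feasible_schedule K \<Gamma> s T B \<longleftrightarrow>
     (\<forall>u\<in>nl s T. hitting_set K (\<Gamma> ` child s T u) (B u))"

definition cost ::
  "real \<Rightarrow> real \<Rightarrow> 'a \<Rightarrow> 'a set \<times> 'a set set \<Rightarrow> ('a \<Rightarrow> nat set) \<Rightarrow> real" where
  "cost e_s e_r s T B = (\<Sum>u\<in>nl s T. real (card (B u)) * e_s) + (real (card (Nodes T)) - 1) * e_r"

definition MEMTCS_optimal ::
  "'a set \<Rightarrow> 'a set set \<Rightarrow> nat \<Rightarrow> ('a \<Rightarrow> nat set) \<Rightarrow> 'a set \<Rightarrow> 'a \<Rightarrow> real \<Rightarrow> real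
    \<Rightarrow> 'a set \<times> 'a set set \<Rightarrow> ('a \<Rightarrow> nat set) \<Rightarrow> bool" where
  "MEMTCS_optimal V E K \<Gamma> M s e_s e_r T B \<longleftrightarrow>
     multicast_tree V E M T \<and> feasible_schedule K \<Gamma> s T B \<and>
     (\<forall>T' B'. multicast_tree V E M T' \<and> feasible_schedule K \<Gamma> s T' B' \<longrightarrow>
        cost e_s e_r s T B \<le> cost e_s e_r s T' B')"

end

theory Submission
  imports Defs
begin

lemma adj_conv: "converse (adj F) = adj F"
  unfolding adj_def by (auto simp: insert_commute)

lemma reach_sym: "reach F x y \<Longrightarrow> reach F y x"
  unfolding reach_def
  by (metis adj_conv converse_iff rtrancl_converseI)

lemma reach_mono: "F \<subseteq> G \<Longrightarrow> reach F x y \<Longrightarrow> reach G x y"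
  unfolding reach_def
proof -
  assume "F \<subseteq> G" "(x, y) \<in> (adj F)\<^sup>*"
  moreover have "adj F \<subseteq> adj G" using \<open>F \<subseteq> G\<close> unfolding adj_def by auto
  ultimately show "(x, y) \<in> (adj G)\<^sup>*" using rtrancl_mono by blast
qed

lemma reach_trans: "reach F x y \<Longrightarrow> reach F y z \<Longrightarrow> reach F x z"
  unfolding reach_def by simp

lemma reach_edge: "{x,y} \<in> F \<Longrightarrow> reach F x y"
  unfolding reach_def adj_def by auto

lemma reach_refl: "reach F x x"
  unfolding reach_def by simp

lemma dbl: "{a,b} = {c,d} \<Longrightarrow> (a=c \<and> b=d) \<or> (a=d \<and> b=c)"
  by (metis doubleton_eq_iff)

lemma reach_split:
  assumes "reach F x y"
  shows "reach (F-{{a,b}}) x y \<or> reach (F-{{a,b}}) x a \<or> reach (F-{{a,b}}) x b"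
  using assms unfolding reach_def
proof (induction rule: rtrancl_induct)
  case base then show ?case by simp
next
  case (step y z)
  show ?case
  proof (cases "{y,z} = {a,b}")
    case True
    then have "y = a \<or> y = b" using dbl by blast
    then show ?thesis using step.IH by auto
  next
    case False
    then have "(y,z) \<in> adj (F - {{a,b}})" using step.hyps(2) unfolding adj_def by auto
    then show ?thesis using step.IH
      by (meson rtrancl.rtrancl_into_rtrancl)
  qed
qed

lemma reroute:
  assumes "reach (F-{{u,v}}) v u" "reach F x y"
  shows "reach (F-{{u,v}}) x y"
  using assms(2) unfolding reach_def
proof (induction rule: rtrancl_induct)
  case base then show ?case by simp
next
  case (step y z)
  show ?case
  proof (cases "{y,z} = {u,v}")
    case True
    have uv: "reach (F-{{u,v}}) u v" using assms(1) by (rule reach_sym)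
    have xy: "reach (F-{{u,v}}) x y" using step.IH unfolding reach_def .
    have yz: "reach (F-{{u,v}}) y z"
      using dbl[OF True]
    proof
      assume "y = u \<and> z = v" then show ?thesis using uv by simp
    next
      assume "y = v \<and> z = u" then show ?thesis using assms(1) by simp
    qed
    show ?thesis using reach_trans[OF xy yz] unfolding reach_def .
  next
    case False
    then have "(y,z) \<in> adj (F - {{u,v}})" using step.hyps(2) unfolding adj_def by auto
    then show ?thesis using step.IH
      by (meson rtrancl.rtrancl_into_rtrancl)
  qed
qed

lemma bridge:
  assumes "tree_in V E (N,F)" "{u,v} \<in> F"
  shows "\<not> reach (F-{{u,v}}) v u"
proof
  assume r: "reach (F-{{u,v}}) v u"
  have "connected_on N F" using assms(1) unfolding tree_in_def by auto
  then have "connected_on N (F - {{u,v}})"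
    unfolding connected_on_def using reroute[OF r] by blast
  then show False using assms unfolding tree_in_def by auto
qed

lemma two_parents:
  assumes t: "tree_in V E (N,F)" and e1: "{u,v1} \<in> F" and e2: "{u,v2} \<in> F"
    and r1: "reach (F-{{u,v1}}) v1 s" and r2: "reach (F-{{u,v2}}) v2 s"
  shows "v1 = v2"
proof (rule ccontr)
  assume ne: "v1 \<noteq> v2"
  have neq: "{u,v1} \<noteq> {u,v2}"
  proof
    assume "{u,v1} = {u,v2}"
    then have "v1 \<in> {u,v2}" by blast
    then have "v1 = u" using ne by blast
    have "v2 \<in> {u,v1}" using \<open>{u,v1} = {u,v2}\<close> by blast
    then have "v2 = u" using ne by blast
    then show False using ne \<open>v1 = u\<close> by simp
  qed
  define G where "G = F - {{u,v1}} - {{u,v2}}"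
  have G2: "G = F - {{u,v2}} - {{u,v1}}" unfolding G_def by auto
  have sub1: "G \<subseteq> F - {{u,v1}}" unfolding G_def by auto
  have sub2: "G \<subseteq> F - {{u,v2}}" unfolding G_def by auto
  have e2'' : "{v2,u} \<in> F - {{u,v1}}" using e2 neq by (auto simp: insert_commute)
  have e1'' : "{v1,u} \<in> F - {{u,v2}}" using e1 neq by (auto simp: insert_commute)
  have b1: "\<not> reach (F-{{u,v1}}) v1 u" using bridge[OF t e1] .
  have b2: "\<not> reach (F-{{u,v2}}) v2 u" using bridge[OF t e2] .
  have a: "reach G v1 s"
  proof -
    have "reach G v1 s \<or> reach G v1 u \<or> reach G v1 v2"
      using reach_split[OF r1, of u v2] unfolding G_def .
    moreover have "\<not> reach G v1 u"
    proof
      assume "reach G v1 u"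
      then have "reach (F-{{u,v1}}) v1 u" by (rule reach_mono[OF sub1])
      then show False using b1 by simp
    qed
    moreover have "\<not> reach G v1 v2"
    proof
      assume "reach G v1 v2"
      then have "reach (F-{{u,v1}}) v1 v2" by (rule reach_mono[OF sub1])
      then have "reach (F-{{u,v1}}) v1 u" using reach_edge[OF e2''] by (rule reach_trans)
      then show False using b1 by simp
    qed
    ultimately show ?thesis by simp
  qed
  have b: "reach G v2 s"
  proof -
    have "reach G v2 s \<or> reach G v2 u \<or> reach G v2 v1"
      using reach_split[OF r2, of u v1] unfolding G2 .
    moreover have "\<not> reach G v2 u"
    proof
      assume "reach G v2 u"
      then have "reach (F-{{u,v2}}) v2 u" by (rule reach_mono[OF sub2])
      then show False using b2 by simp
    qed
    moreover have "\<not> reach G v2 v1"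
    proof
      assume "reach G v2 v1"
      then have "reach (F-{{u,v2}}) v2 v1" by (rule reach_mono[OF sub2])
      then have "reach (F-{{u,v2}}) v2 u" using reach_edge[OF e1''] by (rule reach_trans)
      then show False using b2 by simp
    qed
    ultimately show ?thesis by simp
  qed
  have "reach G v1 v2" using a reach_sym[OF b] by (rule reach_trans)
  then have "reach (F - {{u,v1}}) v1 v2" by (rule reach_mono[OF sub1])
  then have "reach (F - {{u,v1}}) v1 u" using reach_edge[OF e2''] by (rule reach_trans)
  then show False using b1 by simp
qed

lemma nonchild_le1:
  assumes t: "tree_in V E (N,F)"
  shows "\<forall>v1\<in>nb (N,F) u - child s (N,F) u. \<forall>v2\<in>nb (N,F) u - child s (N,F) u. v1 = v2"
  using two_parents[OF t] unfolding nb_def child_def by auto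

lemma nonchild_root:
  assumes t: "tree_in V E (N,F)"
  shows "nb (N,F) s - child s (N,F) s = {}"
  using bridge[OF t] unfolding nb_def child_def by auto

lemma nb_sub:
  assumes t: "tree_in V E (N,F)"
  shows "nb (N,F) u \<subseteq> N"
  using t unfolding tree_in_def nb_def by auto

lemma local_bound:
  assumes t: "tree_in V E (N,F)"
    and G: "\<forall>u\<in>V. \<Gamma> u \<noteq> {} \<and> \<Gamma> u \<subseteq> {1..K}"
    and hs: "hitting_set K (\<Gamma> ` child s (N,F) u) Bu"
  shows "min_hs_card K (\<Gamma> ` nb (N,F) u) \<le> card Bu + (if u = s then 0 else 1)"
proof -
  define P where "P = nb (N,F) u - child s (N,F) u"
  define g where "g = (\<lambda>v. SOME x. x \<in> \<Gamma> v)"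
  define H where "H = Bu \<union> g ` P"
  have NV: "N \<subseteq> V" using t unfolding tree_in_def by auto
  have nbV: "nb (N,F) u \<subseteq> V" using nb_sub[OF t] NV by blast
  have gin: "g v \<in> \<Gamma> v" if "v \<in> V" for v
    unfolding g_def using G that by (meson ex_in_conv someI_ex)
  have BuK: "Bu \<subseteq> {1..K}" using hs unfolding hitting_set_def by auto
  have finBu: "finite Bu" using BuK finite_subset by blast
  have gK: "g ` P \<subseteq> {1..K}"
  proof
    fix x assume "x \<in> g ` P"
    then obtain v where v: "v \<in> P" "x = g v" by blast
    then have "v \<in> V" using nbV unfolding P_def by blast
    then show "x \<in> {1..K}" using gin G v by blast
  qed
  have hsH: "hitting_set K (\<Gamma> ` nb (N,F) u) H"
    unfolding hitting_set_def
  proof (intro conjI ballI)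
    show "H \<subseteq> {1..K}" unfolding H_def using BuK gK by blast
  next
    fix X assume "X \<in> \<Gamma> ` nb (N,F) u"
    then obtain v where v: "v \<in> nb (N,F) u" "X = \<Gamma> v" by blast
    show "H \<inter> X \<noteq> {}"
    proof (cases "v \<in> child s (N,F) u")
      case True
      then have "Bu \<inter> \<Gamma> v \<noteq> {}" using hs unfolding hitting_set_def by blast
      then show ?thesis unfolding H_def using v by blast
    next
      case False
      then have "v \<in> P" unfolding P_def using v by blast
      moreover have "g v \<in> \<Gamma> v" using gin nbV v by blast
      ultimately show ?thesis unfolding H_def using v by blast
    qed
  qed
  have "min_hs_card K (\<Gamma> ` nb (N,F) u) \<le> card H"
    unfolding min_hs_card_def by (rule Least_le) (use hsH in blast)
  also have "card H \<le> card Bu + card (g ` P)" unfolding H_def by (rule card_Un_le)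
  also have "card (g ` P) \<le> card P" 
  proof -
    have "finite P" using nonchild_le1[OF t, of u s] unfolding P_def
      by (metis finite.simps subsetI singletonI singleton_iff finite_subset ex_in_conv)
    then show ?thesis by (rule card_image_le)
  qed
  also have "card P \<le> (if u = s then 0 else 1)"
  proof (cases "u = s")
    case True
    have "P = {}" using nonchild_root[OF t, of s] unfolding P_def True .
    then show ?thesis by simp
  next
    case False
    have "\<forall>v1\<in>P. \<forall>v2\<in>P. v1 = v2" using nonchild_le1[OF t, of u s] unfolding P_def .
    then have "card P \<le> Suc 0"
      by (metis card.empty card.insert card_le_Suc0_iff_eq empty_iff finite.intros(1) insert_iff le_refl subsetI subset_singleton_iff zero_le)
    then show ?thesis using False by simp
  qed
  finally show ?thesis by simp
qed

lemma arith_aux: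
  fixes xi x a b c d n r :: nat
  assumes "xi \<le> x" "x \<le> a + b" "b + c = d" "n = a + r" "c + e = 1" "e \<le> r"
  shows "int xi - int d + 1 \<le> int n"
  using assms by linarith

lemma root_nl:
  assumes t: "tree_in V E (N,F)" and sN: "s \<in> N" and mN: "m \<in> N" and ne: "m \<noteq> s"
  shows "child s (N,F) s \<noteq> {}"
proof -
  have "connected_on N F" using t unfolding tree_in_def by auto
  then have "(s, m) \<in> (adj F)\<^sup>*" using sN mN unfolding connected_on_def reach_def by blast
  then obtain y where "(s, y) \<in> adj F" using ne by (metis converse_rtranclE)
  then have "{s,y} \<in> F" unfolding adj_def by simp
  then have "y \<in> nb (N,F) s" unfolding nb_def by simp
  then show ?thesis using nonchild_root[OF t, of s] by blast
qed

theorem lemma6: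
  fixes V :: "'a set" and E :: "'a set set" and K :: nat and \<Gamma> :: "'a \<Rightarrow> nat set"
    and M :: "'a set" and s :: 'a and e_s e_r :: real
    and T_opt T_I :: "'a set \<times> 'a set set" and B_opt :: "'a \<Rightarrow> nat set"
  assumes "connected_graph V E"
    and "card V \<ge> 2"
    and "K > 0"
    and "\<forall>u\<in>V. \<Gamma> u \<noteq> {} \<and> \<Gamma> u \<subseteq> {1..K}"
    and "M \<subseteq> V" and "s \<in> M" and "card M \<ge> 2"
    and "e_s \<ge> e_r" and "e_r \<ge> 0"
    and "MEMTCS_optimal V E K \<Gamma> M s e_s e_r T_opt B_opt"
    and "min_isotropic_scattering_tree V E K \<Gamma> M T_I"
  shows "int (\<Sum>u\<in>nl s T_opt. card (B_opt u)) \<ge>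
           int (Xi K \<Gamma> T_I) - int (card (dplus T_opt)) + 1"
proof -
  obtain N F where TN: "T_opt = (N,F)" by fastforce
  have t: "tree_in V E (N,F)" and MN: "M \<subseteq> N"
    using assms(10) unfolding MEMTCS_optimal_def multicast_tree_def TN Nodes_def by auto
  have feas: "\<forall>u\<in>nl s (N,F). hitting_set K (\<Gamma> ` child s (N,F) u) (B_opt u)"
    using assms(10) unfolding MEMTCS_optimal_def feasible_schedule_def TN by auto
  have XiI: "Xi K \<Gamma> T_I \<le> Xi K \<Gamma> (N,F)"
    using assms(11) assms(10) unfolding min_isotropic_scattering_tree_def MEMTCS_optimal_def
      multicast_tree_def TN by blast
  have finN: "finite N" using t unfolding tree_in_def by auto
  define D where "D = dplus (N,F)"
  define NL where "NL = nl s (N,F)"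
  have finD: "finite D" unfolding D_def dplus_def Nodes_def using finN by auto
  have finNL: "finite NL" unfolding NL_def nl_def Nodes_def using finN by auto
  have sN: "s \<in> N" using assms(6) MN by blast
  obtain m where m: "m \<in> M" "m \<noteq> s"
  proof -
    have "\<not> M \<subseteq> {s}"
    proof
      assume "M \<subseteq> {s}"
      then have "card M \<le> card {s}" by (intro card_mono) auto
      then show False using assms(7) by simp
    qed
    then show ?thesis using that by blast
  qed
  have sNL: "s \<in> NL" unfolding NL_def nl_def Nodes_def
    using root_nl[OF t sN _ m(2)] m(1) MN sN by auto
  have DNL: "D \<subseteq> NL"
  proof
    fix u assume uD: "u \<in> D"
    then have uN: "u \<in> N" and c: "card (nb (N,F) u) > 1"
      unfolding D_def dplus_def Nodes_def by auto
    have "child s (N,F) u \<noteq> {}"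
    proof
      assume ce: "child s (N,F) u = {}"
      have "\<forall>v1\<in>nb (N,F) u. \<forall>v2\<in>nb (N,F) u. v1 = v2"
        using nonchild_le1[OF t, of u s] ce by simp
      then have "card (nb (N,F) u) \<le> Suc 0"
        using c card_le_Suc0_iff_eq by (metis card.infinite less_nat_zero_code)
      then show False using c by simp
    qed
    then show "u \<in> NL" unfolding NL_def nl_def Nodes_def using uN by simp
  qed
  have hsu: "hitting_set K (\<Gamma> ` child s (N,F) u) (B_opt u)" if "u \<in> NL" for u
    using feas that unfolding NL_def by blast
  have finB: "finite (B_opt u)" if "u \<in> NL" for u
    using hsu[OF that] unfolding hitting_set_def by (meson finite_atLeastAtMost finite_subset)
  have Bs: "card (B_opt s) \<ge> 1"
  proof -
    obtain v where v: "v \<in> child s (N,F) s" using sNL unfolding NL_def nl_def by blast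
    then have "B_opt s \<inter> \<Gamma> v \<noteq> {}" using hsu[OF sNL] unfolding hitting_set_def by blast
    then have "B_opt s \<noteq> {}" by blast
    then show ?thesis using finB[OF sNL] by (simp add: Suc_le_eq card_gt_0_iff)
  qed
  have loc: "min_hs_card K (\<Gamma> ` nb (N,F) u) \<le> card (B_opt u) + (if u = s then 0 else 1)"
    if "u \<in> D" for u
    using local_bound[OF t assms(4) hsu] DNL that by blast
  have "Xi K \<Gamma> (N,F) = (\<Sum>u\<in>D. min_hs_card K (\<Gamma> ` nb (N,F) u))"
    unfolding Xi_def D_def ..
  also have "\<dots> \<le> (\<Sum>u\<in>D. card (B_opt u) + (if u = s then 0 else 1))"
    by (rule sum_mono) (rule loc)
  also have "\<dots> = (\<Sum>u\<in>D. card (B_opt u)) + (\<Sum>u\<in>D. (if u = s then 0 else 1))"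
    by (rule sum.distrib)
  finally have X1: "Xi K \<Gamma> (N,F) \<le> (\<Sum>u\<in>D. card (B_opt u)) + (\<Sum>u\<in>D. (if u = s then 0 else 1::nat))" .
  have cnt: "(\<Sum>u\<in>D. (if u = s then 0 else 1::nat)) + (if s \<in> D then 1 else 0) = card D"
  proof -
    have "(\<Sum>u\<in>D. (if u = s then 0 else 1::nat)) = (\<Sum>u\<in>D - {s}. 1)"
      by (rule sum.mono_neutral_cong_right) (use finD in auto)
    moreover have "s \<in> D \<Longrightarrow> card D > 0" using finD card_gt_0_iff by blast
    ultimately show ?thesis using finD by (cases "s \<in> D") (auto simp: card_Diff_singleton)
  qed
  have split: "(\<Sum>u\<in>NL. card (B_opt u)) = (\<Sum>u\<in>D. card (B_opt u)) + (\<Sum>u\<in>NL - D. card (B_opt u))"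
    using finNL DNL by (metis add.commute sum.subset_diff)
  have rest: "(\<Sum>u\<in>NL - D. card (B_opt u)) \<ge> (if s \<in> D then 0 else 1)"
  proof (cases "s \<in> D")
    case False
    then have "s \<in> NL - D" using sNL by blast
    then have "card (B_opt s) \<le> (\<Sum>u\<in>NL - D. card (B_opt u))"
      using finNL by (intro member_le_sum) auto
    then show ?thesis using Bs False by simp
  qed simp
  have ce: "(if s \<in> D then 1 else 0) + (if s \<in> D then 0 else 1) = (1::nat)" by simp
  show ?thesis unfolding TN D_def[symmetric] NL_def[symmetric]
    by (rule arith_aux[OF XiI X1 cnt split ce rest])
qed

end
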